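(* Let $n\ge2$, $\mathbf p^0\in\Delta_n$, $\mathbf p^{t+1}=F(\mathbf p^t)$. Then the sequence $L^t=\sum_k(p^t_k)^2$ converges, i.e. $L^\infty=\lim_{t\to\infty}L^t$ exists.
   Context: $\Delta_n=\{\mathbf p\in\mathbb R^n: p_i\ge 0,\ \sum_i p_i=1\}$. For $\mathbf p\in\Delta_n$, $L(\mathbf p)=\sum_{k}p_k^2$ and $F(\mathbf p)_i=p_i\frac{n-p_i}{n-L(\mathbf p)}$. *)

theory Defs
  imports "HOL-Analysis.Analysis"
begin

text \<open>Points of R^n are represented as functions nat => real, with coordinates
indexed by {..<n}; coordinates outside this range are irrelevant.\<close>

definition prob_simplex :: "nat \<Rightarrow> (nat \<Rightarrow> real) set" where
  "prob_simplex n = {p. (\<forall>i<n. p i \<ge> 0) \<and> (\<Sum>i<n. p i) = 1}"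

definition Lsq :: "nat \<Rightarrow> (nat \<Rightarrow> real) \<Rightarrow> real" where
  "Lsq n p = (\<Sum>k<n. (p k)^2)"

definition Fmap :: "nat \<Rightarrow> (nat \<Rightarrow> real) \<Rightarrow> (nat \<Rightarrow> real)" where
  "Fmap n p = (\<lambda>i. p i * (real n - p i) / (real n - Lsq n p))"

end

theory Submission
  imports Defs
begin

lemma simp_le1:
  assumes "q \<in> prob_simplex n" "i < n"
  shows "q i \<le> 1"
proof -
  have "q i \<le> (\<Sum>j<n. q j)"
    using assms by (intro member_le_sum) (auto simp: prob_simplex_def)
  thus ?thesis using assms by (simp add: prob_simplex_def)
qed

lemma Lsq_le1:
  assumes "q \<in> prob_simplex n"
  shows "Lsq n q \<le> 1" "Lsq n q \<ge> 0"
proof -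
  have "Lsq n q \<le> (\<Sum>k<n. q k)" unfolding Lsq_def
  proof (rule sum_mono)
    fix k assume "k \<in> {..<n}"
    then have "0 \<le> q k" "q k \<le> 1" using assms simp_le1 by (auto simp: prob_simplex_def)
    thus "(q k)^2 \<le> q k" using mult_left_le[of "q k" "q k"] by (simp add: power2_eq_square)
  qed
  thus "Lsq n q \<le> 1" using assms by (simp add: prob_simplex_def)
  show "Lsq n q \<ge> 0" unfolding Lsq_def by (intro sum_nonneg) auto
qed

lemma F_simplex:
  assumes "q \<in> prob_simplex n" "n \<ge> 2"
  shows "Fmap n q \<in> prob_simplex n"
proof -
  have L: "Lsq n q \<le> 1" using Lsq_le1 assms by auto
  have d: "real n - Lsq n q > 0" using L assms by simp
  have nn: "\<forall>i<n. Fmap n q i \<ge> 0"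
  proof (intro allI impI)
    fix i assume "i < n"
    then have "0 \<le> q i" "q i \<le> 1" using assms simp_le1 by (auto simp: prob_simplex_def)
    then show "Fmap n q i \<ge> 0" unfolding Fmap_def using d assms by simp
  qed
  have "(\<Sum>i<n. Fmap n q i) = (\<Sum>i<n. q i * (real n - q i)) / (real n - Lsq n q)"
    unfolding Fmap_def by (simp add: sum_divide_distrib)
  also have "(\<Sum>i<n. q i * (real n - q i)) = real n * (\<Sum>i<n. q i) - Lsq n q"
    unfolding Lsq_def by (simp add: algebra_simps sum_subtractf sum_distrib_left power2_eq_square)
  also have "\<dots> = real n - Lsq n q" using assms by (simp add: prob_simplex_def)
  finally have "(\<Sum>i<n. Fmap n q i) = 1" using d by simp
  with nn show ?thesis by (simp add: prob_simplex_def)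
qed

lemma cubic_bound:
  fixes x l m :: real
  assumes "0 \<le> x" "x \<le> 1" "0 \<le> l" "l \<le> 1" "m \<ge> 2"
  shows "x * (m - x)^2 \<le> l * (m - l)^2 + (m^2 - 4*m*l + 3*l^2) * (x - l)"
proof -
  have "l * (m - l)^2 + (m^2 - 4*m*l + 3*l^2) * (x - l) - x * (m - x)^2
        = (x - l)^2 * (2*m - x - 2*l)" by (simp add: algebra_simps power2_eq_square)
  moreover have "(x - l)^2 * (2*m - x - 2*l) \<ge> 0" using assms by simp
  ultimately show ?thesis by linarith
qed

lemma wsum:
  fixes q :: "nat \<Rightarrow> real"
  shows "(\<Sum>i<n. q i * (a + b * (q i - L))) = a * (\<Sum>i<n. q i) + b * ((\<Sum>i<n. (q i)^2) - L * (\<Sum>i<n. q i))"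
proof -
  have "(\<Sum>i<n. q i * (a + b * (q i - L))) = (\<Sum>i<n. a * q i + (b * (q i)^2 - b * L * q i))"
    by (rule sum.cong) (auto simp: algebra_simps power2_eq_square)
  also have "\<dots> = a * (\<Sum>i<n. q i) + (b * (\<Sum>i<n. (q i)^2) - b * L * (\<Sum>i<n. q i))"
    by (simp add: sum.distrib sum_subtractf sum_distrib_left)
  finally show ?thesis by (simp add: algebra_simps)
qed

lemma L_decrease:
  assumes "q \<in> prob_simplex n" "n \<ge> 2"
  shows "Lsq n (Fmap n q) \<le> Lsq n q"
proof -
  define L where "L = Lsq n q"
  define m where "m = real n"
  have L1: "L \<le> 1" "0 \<le> L" using Lsq_le1 assms L_def by auto
  have m2: "m \<ge> 2" using assms m_def by simp
  have d: "m - L > 0" using L1 m2 by simp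
  have s1: "(\<Sum>i<n. q i) = 1" using assms by (simp add: prob_simplex_def)
  have "(\<Sum>i<n. q i * (q i * (m - q i)^2))
      \<le> (\<Sum>i<n. q i * (L * (m - L)^2 + (m^2 - 4*m*L + 3*L^2) * (q i - L)))"
  proof (rule sum_mono)
    fix i assume "i \<in> {..<n}"
    then have "0 \<le> q i" "q i \<le> 1" using assms simp_le1 by (auto simp: prob_simplex_def)
    then show "q i * (q i * (m - q i)^2) \<le> q i * (L * (m - L)^2 + (m^2 - 4*m*L + 3*L^2) * (q i - L))"
      using cubic_bound[of "q i" L m] L1 m2 by (intro mult_left_mono) auto
  qed
  also have "\<dots> = L * (m - L)^2 * (\<Sum>i<n. q i) + (m^2 - 4*m*L + 3*L^2) * ((\<Sum>i<n. (q i)^2) - L * (\<Sum>i<n. q i))"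
    by (rule wsum)
  also have "\<dots> = L * (m - L)^2" using s1 L_def by (simp add: Lsq_def)
  finally have ineq: "(\<Sum>i<n. q i * (q i * (m - q i)^2)) \<le> L * (m - L)^2" .
  have "Lsq n (Fmap n q) = (\<Sum>i<n. q i * (q i * (m - q i)^2)) / (m - L)^2"
  proof -
    have F: "Fmap n q = (\<lambda>i. q i * (m - q i) / (m - L))" by (simp add: Fmap_def L_def m_def)
    show ?thesis unfolding F Lsq_def[of n "\<lambda>i. q i * (m - q i) / (m - L)"] sum_divide_distrib
      by (rule sum.cong) (auto simp: power_divide power_mult_distrib power2_eq_square algebra_simps)
  qed
  also have "\<dots> \<le> L * (m - L)^2 / (m - L)^2"
    using ineq d by (intro divide_right_mono) auto
  also have "\<dots> = L" using d by simp
  finally show ?thesis unfolding L_def .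
qed

theorem proposition4:
  fixes n :: nat and p :: "nat \<Rightarrow> nat \<Rightarrow> real"
  assumes "n \<ge> 2"
    and "p 0 \<in> prob_simplex n"
    and "\<And>t. p (Suc t) = Fmap n (p t)"
  shows "convergent (\<lambda>t. Lsq n (p t))"
proof -
  have S: "p t \<in> prob_simplex n" for t
    by (induction t) (use assms F_simplex in auto)
  have dec: "decseq (\<lambda>t. Lsq n (p t))"
    by (rule decseq_SucI) (use assms L_decrease S in auto)
  have "Bseq (\<lambda>t. Lsq n (p t))"
    using Lsq_le1[OF S] by (intro BseqI'[where K=1]) auto
  then show ?thesis using dec Bseq_monoseq_convergent decseq_imp_monoseq by blast
qed

end
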